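(* Let $G$ be a finitely generated group, $\mathcal{P}=\{P_i\}$ a finite collection of infinite subgroups and $X\subseteq G$ a generating set of $G$ with $\mathcal{P}\hookrightarrow_h(G,X)$. Let $\delta$ be a constant such that for every $r\in\mathbb{N}\cup\{0\}$ the space $\mathbb{G}_r=\mathbb{K}_r(G,X,\cup_iX_i,\{P_i\})$ is $\delta$-hyperbolic. Then for every $L>\delta$ and every $r$, every coned-off $L$-horoball is convex in $\mathbb{G}_r$.
   Context: $\mathcal{P}\hookrightarrow_h(G,X)$: $G=\langle X\cup\bigcup\mathcal{P}\rangle$, the Cayley graph with respect to $X\sqcup\bigsqcup\mathcal{P}$ is hyperbolic, and each $P_i$ is locally finite for $\hat d_i(h,k)$ = length of a shortest path from $h$ to $k$ in that Cayley graph using no edge labelled by an element of $P_i$ with both endpoints in $P_i$. Construction of $\mathbb{K}_r$: fix a strongly bounded relative presentation $\langle X,\mathcal{P}\mid\mathcal{S}\cup\mathcal{R}\rangle$ of $G$ ($\mathcal{S}$ = all relations of the $P_i$; relators in $\mathcal{R}$ have bounded length and only finitely many letters of each $P_i$ occur in $\mathcal{R}$). Let $X_i$ be the letters from $P_i\setminus\{1\}$ occurring in $\mathcal{R}$, $\mathcal{X}=X\cup\bigcup X_i$. For a graph $\Gamma$, the combinatorial horoball $\mathcal{H}(\Gamma)$ has vertices $\Gamma^{(0)}\times\mathbb{Z}_{\ge0}$ (depth = second coordinate), the edges of $\Gamma$ at depth 0, horizontal edges $(v,n)$–$(w,n)$ for $n\ge1$, $0<d_\Gamma(v,w)\le2^n$,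 and vertical edges $(v,n)$–$(v,n+1)$; the coned-off horoball $\mathcal{H}_r(\Gamma)$ adds an apex joined to all vertices of depth $\ge r$ (the apex is considered to have depth $r+1$). $\mathbb{K}_r(G,X,\cup_iX_i,\{P_i\})$ is the Cayley graph $\Gamma(G,\mathcal{X})$ with a copy of $\mathcal{H}_r(g\Gamma(P_i,X_i))$ glued at depth 0 along $g\Gamma(P_i,X_i)$ for every coset $gP_i$. For $L\ge1$, the coned-off $L$-horoball contained in the coned-off horoball $\mathcal{H}_r(g\Gamma(P_i,X_i))$ is the subgraph spanned by its vertices of depth at least $L$ (including the apex). A subset is convex if every geodesic of $\mathbb{G}_r$ joining two of its points lies in it. *)

theory Defs
  imports Complex_Main "HOL-Algebra.Generated_Groups" "HOL-Algebra.Coset"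
    "HOL-Library.Extended_Nat"
begin

definition walk :: "'v set \<Rightarrow> ('v \<times> 'v) set \<Rightarrow> 'v list \<Rightarrow> bool" where
  "walk V E xs \<longleftrightarrow> xs \<noteq> [] \<and> set xs \<subseteq> V \<and>
     (\<forall>k. Suc k < length xs \<longrightarrow> (xs ! k, xs ! Suc k) \<in> E)"

text \<open>Combinatorial graph distance (infinite if no walk exists).\<close>
definition gdist :: "'v set \<Rightarrow> ('v \<times> 'v) set \<Rightarrow> 'v \<Rightarrow> 'v \<Rightarrow> enat" where
  "gdist V E u v = (INF xs\<in>{xs. walk V E xs \<and> hd xs = u \<and> last xs = v}.
                       enat (length xs - 1))"

definition geodesic :: "'v set \<Rightarrow> ('v \<times> 'v) set \<Rightarrow> 'v list \<Rightarrow> bool" where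
  "geodesic V E xs \<longleftrightarrow> walk V E xs \<and>
     enat (length xs - 1) = gdist V E (hd xs) (last xs)"

definition hyp_graph :: "real \<Rightarrow> 'v set \<Rightarrow> ('v \<times> 'v) set \<Rightarrow> bool" where
  "hyp_graph \<delta> V E \<longleftrightarrow>
     (\<forall>p q s. geodesic V E p \<and> geodesic V E q \<and> geodesic V E s \<and>
        last p = hd q \<and> last q = hd s \<and> last s = hd p \<longrightarrow>
        (\<forall>v\<in>set p. \<exists>w\<in>set q \<union> set s. \<exists>n::nat.
            gdist V E v w = enat n \<and> real n \<le> \<delta>))"

definition hyperbolic_graph :: "'v set \<Rightarrow> ('v \<times> 'v) set \<Rightarrow> bool" where
  "hyperbolic_graph V E \<longleftrightarrow> (\<exists>\<delta>. hyp_graph \<delta> V E)"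

definition convex_in :: "'v set \<Rightarrow> ('v \<times> 'v) set \<Rightarrow> 'v set \<Rightarrow> bool" where
  "convex_in V E S \<longleftrightarrow>
     (\<forall>xs. geodesic V E xs \<and> hd xs \<in> S \<and> last xs \<in> S \<longrightarrow> set xs \<subseteq> S)"

definition fin_gen :: "('g, 'b) monoid_scheme \<Rightarrow> bool" where
  "fin_gen G \<longleftrightarrow> (\<exists>S. finite S \<and> S \<subseteq> carrier G \<and> generate G S = carrier G)"

definition lcosets_of :: "('g, 'b) monoid_scheme \<Rightarrow> 'g set \<Rightarrow> 'g set set" where
  "lcosets_of G H = {g <#\<^bsub>G\<^esub> H | g. g \<in> carrier G}"

definition cay_edges :: "('g, 'b) monoid_scheme \<Rightarrow> 'g set \<Rightarrow> 'g set \<Rightarrow> ('g \<times> 'g) set" where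
  "cay_edges G C A = (let E = {(u, u \<otimes>\<^bsub>G\<^esub> a) | u a. u \<in> C \<and> a \<in> A \<and> u \<otimes>\<^bsub>G\<^esub> a \<in> C}
                      in E \<union> E\<inverse>)"

text \<open>Labels of the alphabet X \<squnion> \<Squnion>P_i (disjoint union, letters tagged).\<close>
datatype ('g, 'i) label = LX 'g | LP 'i 'g

fun lab_elt :: "('g, 'i) label \<Rightarrow> 'g" where
  "lab_elt (LX x) = x" | "lab_elt (LP i p) = p"

definition labels :: "'g set \<Rightarrow> 'i set \<Rightarrow> ('i \<Rightarrow> 'g set) \<Rightarrow> ('g, 'i) label set" where
  "labels X I P = LX ` X \<union> {LP i p | i p. i \<in> I \<and> p \<in> P i}"

definition lcay_edges :: "('g, 'b) monoid_scheme \<Rightarrow> 'g set \<Rightarrow> 'i set \<Rightarrow> ('i \<Rightarrow> 'g set)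
    \<Rightarrow> ('g \<Rightarrow> ('g, 'i) label \<Rightarrow> bool) \<Rightarrow> ('g \<times> 'g) set" where
  "lcay_edges G X I P ok =
     (let E = {(g, g \<otimes>\<^bsub>G\<^esub> lab_elt a) | g a. g \<in> carrier G \<and> a \<in> labels X I P \<and> ok g a}
      in E \<union> E\<inverse>)"

text \<open>The relative metric d-hat_i: paths avoiding edges labelled by elements of P_i
with both endpoints in P_i.\<close>
definition dhat :: "('g, 'b) monoid_scheme \<Rightarrow> 'g set \<Rightarrow> 'i set \<Rightarrow> ('i \<Rightarrow> 'g set) \<Rightarrow> 'i
    \<Rightarrow> 'g \<Rightarrow> 'g \<Rightarrow> enat" where
  "dhat G X I P i = gdist (carrier G)
     (lcay_edges G X I P (\<lambda>g a. \<not> (\<exists>p. a = LP i p \<and> g \<in> P i)))"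

definition hyp_embedded :: "('g, 'b) monoid_scheme \<Rightarrow> 'g set \<Rightarrow> 'i set \<Rightarrow> ('i \<Rightarrow> 'g set) \<Rightarrow> bool" where
  "hyp_embedded G X I P \<longleftrightarrow>
     generate G (X \<union> (\<Union>i\<in>I. P i)) = carrier G \<and>
     hyperbolic_graph (carrier G) (lcay_edges G X I P (\<lambda>_ _. True)) \<and>
     (\<forall>i\<in>I. \<forall>h\<in>P i. \<forall>n::nat. finite {k \<in> P i. dhat G X I P i h k \<le> enat n})"

text \<open>Letters of words in the free product F(X) * (*_i P_i): x^{+1}/x^{-1} (bool = sign)
and letters p of P_i (tagged by i).\<close>
datatype ('g, 'i) rletter = RX 'g bool | RP 'i 'g

fun eval_letter :: "('g, 'b) monoid_scheme \<Rightarrow> ('g, 'i) rletter \<Rightarrow> 'g" where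
  "eval_letter G (RX x True) = x"
| "eval_letter G (RX x False) = inv\<^bsub>G\<^esub> x"
| "eval_letter G (RP i p) = p"

definition eval_word :: "('g, 'b) monoid_scheme \<Rightarrow> ('g, 'i) rletter list \<Rightarrow> 'g" where
  "eval_word G w = foldr (\<lambda>a g. eval_letter G a \<otimes>\<^bsub>G\<^esub> g) w \<one>\<^bsub>G\<^esub>"

definition valid_word :: "'g set \<Rightarrow> 'i set \<Rightarrow> ('i \<Rightarrow> 'g set) \<Rightarrow> ('g, 'i) rletter list \<Rightarrow> bool" where
  "valid_word X I P w \<longleftrightarrow>
     (\<forall>a\<in>set w. (\<exists>x b. a = RX x b \<and> x \<in> X) \<or> (\<exists>i p. a = RP i p \<and> i \<in> I \<and> p \<in> P i))"

text \<open>Elementary moves: free cancellation, the multiplication table of the P_i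
(the relations S), and insertion/deletion of relators from R.\<close>
inductive pstep :: "('g, 'b) monoid_scheme \<Rightarrow> ('i \<Rightarrow> 'g set) \<Rightarrow> ('g, 'i) rletter list set
    \<Rightarrow> ('g, 'i) rletter list \<Rightarrow> ('g, 'i) rletter list \<Rightarrow> bool"
  for G P R where
  free: "pstep G P R (u @ [RX x b, RX x (\<not> b)] @ v) (u @ v)"
| mult: "p \<in> P i \<Longrightarrow> q \<in> P i \<Longrightarrow>
         pstep G P R (u @ [RP i p, RP i q] @ v) (u @ [RP i (p \<otimes>\<^bsub>G\<^esub> q)] @ v)"
| one: "pstep G P R (u @ [RP i \<one>\<^bsub>G\<^esub>] @ v) (u @ v)"
| rel: "r \<in> R \<Longrightarrow> pstep G P R (u @ r @ v) (u @ v)"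

text \<open>Equality in F(X) * (*_i P_i) / <<R>>, on words over the alphabet.\<close>
definition pres_eq :: "('g, 'b) monoid_scheme \<Rightarrow> 'g set \<Rightarrow> 'i set \<Rightarrow> ('i \<Rightarrow> 'g set)
    \<Rightarrow> ('g, 'i) rletter list set \<Rightarrow> ('g, 'i) rletter list \<Rightarrow> ('g, 'i) rletter list \<Rightarrow> bool" where
  "pres_eq G X I P R = (\<lambda>u v. valid_word X I P u \<and> valid_word X I P v \<and>
        (pstep G P R u v \<or> pstep G P R v u))\<^sup>*\<^sup>*"

text \<open><X, P | S \<union> R> is a relative presentation of G: the natural map from the free
product F(X) * (*_i P_i) is onto G and its kernel is the normal closure of R.\<close>
definition rel_presentation :: "('g, 'b) monoid_scheme \<Rightarrow> 'g set \<Rightarrow> 'i set \<Rightarrow> ('i \<Rightarrow> 'g set)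
    \<Rightarrow> ('g, 'i) rletter list set \<Rightarrow> bool" where
  "rel_presentation G X I P R \<longleftrightarrow>
     (\<forall>r\<in>R. valid_word X I P r) \<and>
     generate G (X \<union> (\<Union>i\<in>I. P i)) = carrier G \<and>
     (\<forall>w. valid_word X I P w \<longrightarrow> (eval_word G w = \<one>\<^bsub>G\<^esub> \<longleftrightarrow> pres_eq G X I P R w []))"

definition strongly_bounded_rel_pres :: "('g, 'b) monoid_scheme \<Rightarrow> 'g set \<Rightarrow> 'i set
    \<Rightarrow> ('i \<Rightarrow> 'g set) \<Rightarrow> ('g, 'i) rletter list set \<Rightarrow> bool" where
  "strongly_bounded_rel_pres G X I P R \<longleftrightarrow>
     rel_presentation G X I P R \<and>
     (\<exists>N::nat. \<forall>r\<in>R. length r \<le> N) \<and>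
     (\<forall>i\<in>I. finite {p. \<exists>r\<in>R. RP i p \<in> set r})"

definition Xi :: "('g, 'b) monoid_scheme \<Rightarrow> ('i \<Rightarrow> 'g set) \<Rightarrow> ('g, 'i) rletter list set \<Rightarrow> 'i \<Rightarrow> 'g set" where
  "Xi G P R i = {p \<in> P i - {\<one>\<^bsub>G\<^esub>}. \<exists>r\<in>R. RP i p \<in> set r}"

text \<open>Vertices: Cayley vertices g (depth 0); horoball vertices (v, n) with n \<ge> 1 in the
horoball over the coset C of P_i; apexes. Depth-0 horoball vertices are the
Cayley vertices themselves (gluing).\<close>
datatype ('g, 'i) kvert = KG 'g | KH 'i "'g set" 'g nat | KA 'i "'g set"

definition hv :: "'i \<Rightarrow> 'g set \<Rightarrow> 'g \<Rightarrow> nat \<Rightarrow> ('g, 'i) kvert" where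
  "hv i C v n = (if n = 0 then KG v else KH i C v n)"

definition K_verts :: "('g, 'b) monoid_scheme \<Rightarrow> 'i set \<Rightarrow> ('i \<Rightarrow> 'g set) \<Rightarrow> ('g, 'i) kvert set" where
  "K_verts G I P =
     KG ` carrier G
     \<union> {KH i C v n | i C v n. i \<in> I \<and> C \<in> lcosets_of G (P i) \<and> v \<in> C \<and> 1 \<le> n}
     \<union> {KA i C | i C. i \<in> I \<and> C \<in> lcosets_of G (P i)}"

text \<open>Edges of the coned-off horoball H_r(C \<Gamma>(P_i, X_i)) for a coset C, where Gamma has
vertex set C and distance dG.\<close>
definition horo_edges :: "nat \<Rightarrow> 'i \<Rightarrow> 'g set \<Rightarrow> ('g \<times> 'g) set \<Rightarrow> ('g, 'i) kvert rel" where
  "horo_edges r i C EG =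
     (let E = {(KG v, KG w) | v w. (v, w) \<in> EG}
          \<union> {(KH i C v n, KH i C w n) | v w n. 1 \<le> n \<and> v \<in> C \<and> w \<in> C \<and>
                0 < gdist C EG v w \<and> gdist C EG v w \<le> enat (2 ^ n)}
          \<union> {(hv i C v n, KH i C v (Suc n)) | v n. v \<in> C}
          \<union> {(KA i C, hv i C v n) | v n. v \<in> C \<and> r \<le> n}
      in E \<union> E\<inverse>)"

definition calX :: "('g, 'b) monoid_scheme \<Rightarrow> 'g set \<Rightarrow> 'i set \<Rightarrow> ('i \<Rightarrow> 'g set)
    \<Rightarrow> ('g, 'i) rletter list set \<Rightarrow> 'g set" where
  "calX G X I P R = X \<union> (\<Union>i\<in>I. Xi G P R i)"

definition K_edges :: "('g, 'b) monoid_scheme \<Rightarrow> 'g set \<Rightarrow> 'i set \<Rightarrow> ('i \<Rightarrow> 'g set)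
    \<Rightarrow> ('g, 'i) rletter list set \<Rightarrow> nat \<Rightarrow> ('g, 'i) kvert rel" where
  "K_edges G X I P R r =
     {(KG g, KG h) | g h. (g, h) \<in> cay_edges G (carrier G) (calX G X I P R)}
     \<union> (\<Union>i\<in>I. \<Union>C\<in>lcosets_of G (P i). horo_edges r i C (cay_edges G C (Xi G P R i)))"

text \<open>The coned-off L-horoball in H_r(C \<Gamma>(P_i, X_i)) (L \<ge> 1): vertices of depth \<ge> L,
including the apex.\<close>
definition L_horoball :: "nat \<Rightarrow> 'i \<Rightarrow> 'g set \<Rightarrow> ('g, 'i) kvert set" where
  "L_horoball L i C = {KH i C v n | v n. v \<in> C \<and> L \<le> n} \<union> {KA i C}"

end

theory Submission
  imports Defs
begin


lemma walk_Cons: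
  "walk V E (x # xs) \<longleftrightarrow> x \<in> V \<and> (xs = [] \<or> ((x, hd xs) \<in> E \<and> walk V E xs))"
proof
  assume w: "walk V E (x # xs)"
  show "x \<in> V \<and> (xs = [] \<or> ((x, hd xs) \<in> E \<and> walk V E xs))"
  proof (cases xs)
    case Nil thus ?thesis using w by (simp add: walk_def)
  next
    case (Cons y ys)
    have e: "\<And>k. Suc k < length (x#xs) \<Longrightarrow> ((x#xs) ! k, (x#xs) ! Suc k) \<in> E"
      using w unfolding walk_def by blast
    have "(x, y) \<in> E" using e[of 0] Cons by simp
    moreover have "walk V E xs" unfolding walk_def
    proof (intro conjI allI impI)
      show "xs \<noteq> []" using Cons by simp
      show "set xs \<subseteq> V" using w by (simp add: walk_def)
      fix k assume "Suc k < length xs"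
      thus "(xs ! k, xs ! Suc k) \<in> E" using e[of "Suc k"] by simp
    qed
    ultimately show ?thesis using w Cons by (simp add: walk_def)
  qed
next
  assume a: "x \<in> V \<and> (xs = [] \<or> ((x, hd xs) \<in> E \<and> walk V E xs))"
  show "walk V E (x # xs)"
  proof (cases "xs = []")
    case True thus ?thesis using a by (simp add: walk_def)
  next
    case False
    with a have e: "(x, hd xs) \<in> E" and w: "walk V E xs" by auto
    show ?thesis unfolding walk_def
    proof (intro conjI allI impI)
      show "x # xs \<noteq> []" by simp
      show "set (x # xs) \<subseteq> V" using a w by (simp add: walk_def)
      fix k assume k: "Suc k < length (x # xs)"
      show "((x # xs) ! k, (x # xs) ! Suc k) \<in> E"
      proof (cases k)
        case 0 thus ?thesis using e False by (simp add: hd_conv_nth)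
      next
        case (Suc k') thus ?thesis using w k unfolding walk_def by simp
      qed
    qed
  qed
qed

lemma walk_single: "x \<in> V \<Longrightarrow> walk V E [x]"
  by (simp add: walk_Cons)

lemma walk_append:
  "walk V E p \<Longrightarrow> walk V E q \<Longrightarrow> last p = hd q \<Longrightarrow> walk V E (p @ tl q)"
proof (induction p)
  case Nil thus ?case by (simp add: walk_def)
next
  case (Cons a p)
  show ?case
  proof (cases "p = []")
    case True
    with Cons.prems have "q = a # tl q" by (cases q) (auto simp: walk_def)
    hence "(a # p) @ tl q = q" using True by simp
    thus ?thesis using Cons.prems by simp
  next
    case False
    with Cons.prems have "a \<in> V" "(a, hd p) \<in> E" "walk V E p" by (auto simp: walk_Cons)
    moreover have "walk V E (p @ tl q)" using Cons False calculation by simp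
    ultimately show ?thesis using False by (simp add: walk_Cons)
  qed
qed

lemma walk_rev:
  assumes sym: "\<And>a b. (a, b) \<in> E \<Longrightarrow> (b, a) \<in> E"
  shows "walk V E xs \<Longrightarrow> walk V E (rev xs)"
proof (induction xs)
  case Nil thus ?case by (simp add: walk_def)
next
  case (Cons a xs)
  show ?case
  proof (cases "xs = []")
    case True thus ?thesis using Cons by simp
  next
    case False
    with Cons.prems have a: "a \<in> V" "(a, hd xs) \<in> E" "walk V E xs" by (auto simp: walk_Cons)
    have w1: "walk V E (rev xs)" using Cons.IH a by simp
    have "hd xs \<in> V" using a(3) False by (auto simp: walk_def)
    hence w2: "walk V E [hd xs, a]" using a sym by (simp add: walk_Cons)
    have "walk V E (rev xs @ tl [hd xs, a])"
      by (rule walk_append[OF w1 w2]) (simp add: False last_rev)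
    thus ?thesis by simp
  qed
qed

lemma gdist_le_walk: "walk V E xs \<Longrightarrow> gdist V E (hd xs) (last xs) \<le> enat (length xs - 1)"
  unfolding gdist_def by (rule INF_lower) auto

lemma gdist_enatD:
  assumes "gdist V E u v = enat n"
  shows "\<exists>xs. walk V E xs \<and> hd xs = u \<and> last xs = v \<and> length xs - 1 = n"
proof -
  let ?S = "{xs. walk V E xs \<and> hd xs = u \<and> last xs = v}"
  let ?f = "\<lambda>xs. enat (length xs - 1)"
  have ne: "?S \<noteq> {}"
  proof
    assume e: "?S = {}"
    have "gdist V E u v = \<infinity>" unfolding gdist_def e by (simp add: top_enat_def)
    thus False using assms by simp
  qed
  hence "?f ` ?S \<noteq> {}" by simp
  hence "Inf (?f ` ?S) \<in> ?f ` ?S" unfolding Inf_enat_def by (auto intro: LeastI)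
  hence "enat n \<in> ?f ` ?S" using assms unfolding gdist_def by simp
  thus ?thesis by auto
qed

lemma gdist_triangle: "gdist V E a c \<le> gdist V E a b + gdist V E b c"
proof (cases "gdist V E a b = \<infinity> \<or> gdist V E b c = \<infinity>")
  case True thus ?thesis by auto
next
  case False
  then obtain m n where m: "gdist V E a b = enat m" and n: "gdist V E b c = enat n"
    by (meson not_infinity_eq)
  obtain p where p: "walk V E p" "hd p = a" "last p = b" "length p - 1 = m"
    using gdist_enatD[OF m] by blast
  obtain q where q: "walk V E q" "hd q = b" "last q = c" "length q - 1 = n"
    using gdist_enatD[OF n] by blast
  have pne: "p \<noteq> []" and qne: "q \<noteq> []" using p q by (auto simp: walk_def)
  have w: "walk V E (p @ tl q)" using walk_append[OF p(1) q(1)] p q by simp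
  have h: "hd (p @ tl q) = a" using pne p by simp
  have l: "last (p @ tl q) = c"
  proof (cases "tl q = []")
    case True
    hence "q = [hd q]" using qne by (cases q) auto
    thus ?thesis using True p q by (metis append_Nil2 last_ConsL)
  next
    case False
    thus ?thesis using q qne by (metis last_appendR last_tl)
  qed
  have lp: "length p > 0" using pne by simp
  have lq: "length q > 0" using qne by simp
  have "length (p @ tl q) = length p + (length q - 1)" by simp
  hence len: "length (p @ tl q) - 1 = m + n" using lp lq p(4) q(4) by linarith
  show ?thesis using gdist_le_walk[OF w] h l len m n by simp
qed

lemma gdist_refl: "a \<in> V \<Longrightarrow> gdist V E a a = 0"
proof -
  assume "a \<in> V"
  hence "gdist V E a a \<le> 0" using gdist_le_walk[OF walk_single[of a V E]] by (simp add: zero_enat_def)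
  thus ?thesis by simp
qed

lemma gdist_edge: "a \<in> V \<Longrightarrow> b \<in> V \<Longrightarrow> (a, b) \<in> E \<Longrightarrow> gdist V E a b \<le> 1"
proof -
  assume "a \<in> V" "b \<in> V" "(a, b) \<in> E"
  hence "walk V E [a, b]" by (simp add: walk_Cons)
  from gdist_le_walk[OF this] show ?thesis by (simp add: one_enat_def)
qed

lemma walk_lip:
  assumes "walk V E xs" and lip: "\<And>a b. (a,b) \<in> E \<Longrightarrow> f a \<le> f b + (1::nat) \<and> f b \<le> f a + 1"
  shows "f (last xs) \<le> f (hd xs) + (length xs - 1) \<and> f (hd xs) \<le> f (last xs) + (length xs - 1)"
  using assms(1)
proof (induction xs)
  case Nil thus ?case by (simp add: walk_def)
next
  case (Cons x xs)
  show ?case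
  proof (cases "xs = []")
    case True thus ?thesis by simp
  next
    case False
    with Cons.prems have e: "(x, hd xs) \<in> E" and w: "walk V E xs" by (auto simp: walk_Cons)
    have "length xs \<ge> 1" using False by (cases xs) auto
    with Cons.IH[OF w] lip[OF e] False show ?thesis by auto
  qed
qed

lemma gdist_lip:
  assumes "gdist V E u v = enat n" and lip: "\<And>a b. (a,b) \<in> E \<Longrightarrow> f a \<le> f b + (1::nat) \<and> f b \<le> f a + 1"
  shows "f v \<le> f u + n \<and> f u \<le> f v + n"
proof -
  obtain xs where "walk V E xs" "hd xs = u" "last xs = v" "length xs - 1 = n"
    using gdist_enatD[OF assms(1)] by blast
  with walk_lip[OF this(1) lip] show ?thesis by simp
qed

lemma geodesicI:
  assumes "walk V E q" and "\<And>m. gdist V E (hd q) (last q) = enat m \<Longrightarrow> length q - 1 \<le> m"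
  shows "geodesic V E q"
proof -
  have le: "gdist V E (hd q) (last q) \<le> enat (length q - 1)" by (rule gdist_le_walk[OF assms(1)])
  then obtain m where m: "gdist V E (hd q) (last q) = enat m"
    by (cases "gdist V E (hd q) (last q)") auto
  with le assms(2)[OF m] show ?thesis unfolding geodesic_def using assms(1) by simp
qed




definition HE :: "nat \<Rightarrow> 'i \<Rightarrow> 'g set \<Rightarrow> ('g \<times> 'g) set \<Rightarrow> ('g,'i) kvert \<Rightarrow> ('g,'i) kvert \<Rightarrow> bool" where
 "HE r i C EG a b \<longleftrightarrow> (\<exists>v w. a = KG v \<and> b = KG w \<and> (v,w) \<in> EG)
   \<or> (\<exists>v w n. a = KH i C v n \<and> b = KH i C w n \<and> 1 \<le> n \<and> v \<in> C \<and> w \<in> C \<and>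
        0 < gdist C EG v w \<and> gdist C EG v w \<le> enat (2^n))
   \<or> (\<exists>v n. a = hv i C v n \<and> b = KH i C v (Suc n) \<and> v \<in> C)
   \<or> (\<exists>v n. a = KA i C \<and> b = hv i C v n \<and> v \<in> C \<and> r \<le> n)"

lemma horo_iff: "(a,b) \<in> horo_edges r i C EG \<longleftrightarrow> HE r i C EG a b \<or> HE r i C EG b a"
  unfolding horo_edges_def HE_def Let_def by blast

lemma K_iff: "(a,b) \<in> K_edges G X I P R r \<longleftrightarrow>
   (\<exists>g h. a = KG g \<and> b = KG h \<and> (g,h) \<in> cay_edges G (carrier G) (calX G X I P R)) \<or>
   (\<exists>j\<in>I. \<exists>C'\<in>lcosets_of G (P j). HE r j C' (cay_edges G C' (Xi G P R j)) a b \<or>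
        HE r j C' (cay_edges G C' (Xi G P R j)) b a)"
  unfolding K_edges_def horo_iff[symmetric] by blast

lemma K_sym: "(a,b) \<in> K_edges G X I P R r \<Longrightarrow> (b,a) \<in> K_edges G X I P R r"
proof -
  have c: "\<And>C A a b. (a,b) \<in> cay_edges G C A \<Longrightarrow> (b,a) \<in> cay_edges G C A"
    unfolding cay_edges_def Let_def by blast
  assume "(a,b) \<in> K_edges G X I P R r"
  thus ?thesis unfolding K_iff using c by blast
qed

lemma hv_KH[simp]: "hv i C v m = KH j C' u n \<longleftrightarrow> m \<noteq> 0 \<and> i = j \<and> C = C' \<and> v = u \<and> m = n"
  by (simp add: hv_def)
lemma hv_KA[simp]: "hv i C v m \<noteq> KA j C'" by (simp add: hv_def)
lemma hv_KG[simp]: "hv i C v m = KG u \<longleftrightarrow> m = 0 \<and> v = u" by (simp add: hv_def)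
lemma hv_KH'[simp]: "KH j C' u n = hv i C v m \<longleftrightarrow> m \<noteq> 0 \<and> i = j \<and> C = C' \<and> v = u \<and> m = n"
  by (auto simp add: hv_def)
lemma hv_KA'[simp]: "KA j C' \<noteq> hv i C v m" by (simp add: hv_def)
lemma hv_KG'[simp]: "KG u = hv i C v m \<longleftrightarrow> m = 0 \<and> v = u" by (auto simp add: hv_def)
lemma hv_pos: "0 < m \<Longrightarrow> hv i C v m = KH i C v m" by (simp add: hv_def)

definition fdep :: "'i \<Rightarrow> 'g set \<Rightarrow> nat \<Rightarrow> ('g,'i) kvert \<Rightarrow> nat" where
  "fdep i C r z = (case z of KG _ \<Rightarrow> 0 | KH j C' u m \<Rightarrow> if j = i \<and> C' = C then min m r else 0
       | KA j C' \<Rightarrow> if j = i \<and> C' = C then Suc r else 0)"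

lemma fdep_simps[simp]:
  "fdep i C r (KG g) = 0"
  "fdep i C r (KH j C' u m) = (if j = i \<and> C' = C then min m r else 0)"
  "fdep i C r (KA j C') = (if j = i \<and> C' = C then Suc r else 0)"
  by (simp_all add: fdep_def)

lemma fdep_hv[simp]: "fdep i C r (hv j C' v m) = (if j = i \<and> C' = C then min m r else 0)"
  by (simp add: hv_def)

lemma fdep_HE: "HE r j C' EG a b \<Longrightarrow> fdep i C r a \<le> fdep i C r b + 1 \<and> fdep i C r b \<le> fdep i C r a + 1"
  unfolding HE_def by auto

lemma fdep_lip: "(a,b) \<in> K_edges G X I P R r \<Longrightarrow>
    fdep i C r a \<le> fdep i C r b + 1 \<and> fdep i C r b \<le> fdep i C r a + 1"
  unfolding K_iff using fdep_HE by fastforce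

definition lift :: "nat \<Rightarrow> 'i \<Rightarrow> 'g set \<Rightarrow> ('g,'i) kvert \<Rightarrow> ('g,'i) kvert" where
  "lift L i C z = (case z of KH j C' u m \<Rightarrow> if j = i \<and> C' = C then KH j C' u (max m L) else z | _ \<Rightarrow> z)"

lemma lift_simps[simp]:
  "lift L i C (KH i C u m) = KH i C u (max m L)"
  "lift L i C (KA i C) = KA i C"
  by (simp_all add: lift_def)

definition Hp :: "'i \<Rightarrow> 'g set \<Rightarrow> ('g,'i) kvert set" where
  "Hp i C = {KH i C u m | u m. u \<in> C \<and> 1 \<le> m} \<union> {KA i C}"

lemma KH_VD: "KH i C v n \<in> K_verts G I P \<Longrightarrow> v \<in> C \<and> 1 \<le> n"
  unfolding K_verts_def by auto

lemma notHp_fdep: "z \<in> K_verts G I P \<Longrightarrow> z \<notin> Hp i C \<Longrightarrow> fdep i C r z = 0"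
  by (cases z) (auto simp: Hp_def dest: KH_VD)

lemma nbr_KH:
  assumes "(KH i C u n, b) \<in> K_edges G X I P R r" "1 \<le> n"
  shows "b = KH i C u (Suc n) \<or> b = hv i C u (n - 1) \<or> (b = KA i C \<and> r \<le> n) \<or>
    (\<exists>w. b = KH i C w n \<and>
      ((0 < gdist C (cay_edges G C (Xi G P R i)) u w \<and> gdist C (cay_edges G C (Xi G P R i)) u w \<le> enat (2^n)) \<or>
       (0 < gdist C (cay_edges G C (Xi G P R i)) w u \<and> gdist C (cay_edges G C (Xi G P R i)) w u \<le> enat (2^n))))"
  using assms unfolding K_iff HE_def by auto

lemma nbr_KA:
  assumes "(KA i C, b) \<in> K_edges G X I P R r"
  shows "\<exists>v m. b = hv i C v m \<and> r \<le> m"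
  using assms unfolding K_iff HE_def by auto




context
  fixes G :: "('g, 'b) monoid_scheme" and I :: "'i set" and P :: "'i \<Rightarrow> 'g set"
    and X :: "'g set" and R :: "('g, 'i) rletter list set" and r :: nat and i :: 'i and C :: "'g set"
  assumes iI: "i \<in> I" and CI: "C \<in> lcosets_of G (P i)"
begin

lemma KH_V: "v \<in> C \<Longrightarrow> 1 \<le> n \<Longrightarrow> KH i C v n \<in> K_verts G I P"
  using iI CI unfolding K_verts_def by blast

lemma KA_V: "KA i C \<in> K_verts G I P"
  using iI CI unfolding K_verts_def by blast

lemma inK: "HE r i C (cay_edges G C (Xi G P R i)) a b \<Longrightarrow> (a,b) \<in> K_edges G X I P R r"
  unfolding K_iff apply (rule disjI2) apply (rule bexI[OF _ iI]) apply (rule bexI[OF _ CI]) by (rule disjI1)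

lemma e_vert: "v \<in> C \<Longrightarrow> 1 \<le> n \<Longrightarrow> (KH i C v n, KH i C v (Suc n)) \<in> K_edges G X I P R r"
  by (rule inK) (unfold HE_def, rule disjI2, rule disjI2, rule disjI1, rule exI[of _ v], rule exI[of _ n], simp add: hv_pos)

lemma e_apex: "v \<in> C \<Longrightarrow> r \<le> n \<Longrightarrow> (KA i C, hv i C v n) \<in> K_edges G X I P R r"
  apply (rule inK) unfolding HE_def apply (rule disjI2, rule disjI2, rule disjI2) by blast

lemma e_hor: "1 \<le> n \<Longrightarrow> u \<in> C \<Longrightarrow> w \<in> C \<Longrightarrow> 0 < gdist C (cay_edges G C (Xi G P R i)) u w \<Longrightarrow>
   gdist C (cay_edges G C (Xi G P R i)) u w \<le> enat (2^n) \<Longrightarrow> (KH i C u n, KH i C w n) \<in> K_edges G X I P R r"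
  apply (rule inK) unfolding HE_def apply (rule disjI2, rule disjI1) by blast

lemma vert_path:
  assumes "v \<in> C" "1 \<le> n"
  shows "\<exists>q. walk (K_verts G I P) (K_edges G X I P R r) q \<and> hd q = KH i C v n \<and> last q = KA i C \<and>
     length q = (r - n) + 2 \<and> (\<forall>w\<in>set q. w = KA i C \<or> (\<exists>k\<ge>n. w = KH i C v k))"
  using assms(2)
proof (induction "r - n" arbitrary: n)
  case 0
  have hvn: "hv i C v n = KH i C v n" using 0 by (simp add: hv_pos)
  have "r \<le> n" using 0 by simp
  hence "(KA i C, hv i C v n) \<in> K_edges G X I P R r" using e_apex assms(1) by blast
  hence "(KH i C v n, KA i C) \<in> K_edges G X I P R r" using K_sym hvn by metis
  hence w: "walk (K_verts G I P) (K_edges G X I P R r) [KH i C v n, KA i C]"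
    using KH_V[OF assms(1) 0(2)] KA_V by (simp add: walk_Cons)
  have "\<forall>w\<in>set [KH i C v n, KA i C]. w = KA i C \<or> (\<exists>k\<ge>n. w = KH i C v k)" by auto
  moreover have "length [KH i C v n, KA i C] = (r - n) + 2" using 0(1) by simp
  ultimately show ?case using w by (intro exI[of _ "[KH i C v n, KA i C]"]) simp
next
  case (Suc d)
  have "d = r - Suc n" using Suc by simp
  from Suc.hyps(1)[OF this] obtain q where q: "walk (K_verts G I P) (K_edges G X I P R r) q"
    "hd q = KH i C v (Suc n)" "last q = KA i C" "length q = (r - Suc n) + 2"
    "\<forall>w\<in>set q. w = KA i C \<or> (\<exists>k\<ge>Suc n. w = KH i C v k)" by auto
  have qne: "q \<noteq> []" using q by (auto simp: walk_def)
  have "walk (K_verts G I P) (K_edges G X I P R r) (KH i C v n # q)"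
    using q(1,2) e_vert[OF assms(1) Suc.prems] KH_V[OF assms(1) Suc.prems] qne by (simp add: walk_Cons)
  moreover have "length (KH i C v n # q) = (r - n) + 2" using q(4) Suc.hyps(2) by simp
  moreover have "\<forall>w\<in>set (KH i C v n # q). w = KA i C \<or> (\<exists>k\<ge>n. w = KH i C v k)"
  proof
    fix w assume "w \<in> set (KH i C v n # q)"
    then consider "w = KH i C v n" | "w \<in> set q" by auto
    thus "w = KA i C \<or> (\<exists>k\<ge>n. w = KH i C v k)"
    proof cases
      case 1 thus ?thesis by blast
    next
      case 2 thus ?thesis using q(5) Suc_leD by blast
    qed
  qed
  moreover have "hd (KH i C v n # q) = KH i C v n" by simp
  moreover have "last (KH i C v n # q) = KA i C" using q(3) qne by simp
  ultimately show ?case by blast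
qed


lemma vert_geo:
  assumes "L \<le> r" "1 \<le> L" "x \<in> L_horoball L i C"
  shows "\<exists>q. geodesic (K_verts G I P) (K_edges G X I P R r) q \<and> hd q = x \<and> last q = KA i C \<and>
           (\<forall>w\<in>set q. L \<le> fdep i C r w)"
    and "\<exists>q. geodesic (K_verts G I P) (K_edges G X I P R r) q \<and> hd q = KA i C \<and> last q = x \<and>
           (\<forall>w\<in>set q. L \<le> fdep i C r w)"
proof -
  have "(x = KA i C) \<or> (\<exists>v n. x = KH i C v n \<and> v \<in> C \<and> L \<le> n)"
    using assms(3) unfolding L_horoball_def by blast
  hence "(\<exists>q. geodesic (K_verts G I P) (K_edges G X I P R r) q \<and> hd q = x \<and> last q = KA i C \<and>
           (\<forall>w\<in>set q. L \<le> fdep i C r w)) \<and>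
         (\<exists>q. geodesic (K_verts G I P) (K_edges G X I P R r) q \<and> hd q = KA i C \<and> last q = x \<and>
           (\<forall>w\<in>set q. L \<le> fdep i C r w))"
  proof
    assume x: "x = KA i C"
    have "walk (K_verts G I P) (K_edges G X I P R r) [KA i C]" by (rule walk_single[OF KA_V])
    hence "geodesic (K_verts G I P) (K_edges G X I P R r) [KA i C]"
      unfolding geodesic_def using gdist_refl[OF KA_V] by (simp add: zero_enat_def)
    moreover have "\<forall>w\<in>set [KA i C]. L \<le> fdep i C r w" using assms(1) by simp
    ultimately show ?thesis using x by auto
  next
    assume "\<exists>v n. x = KH i C v n \<and> v \<in> C \<and> L \<le> n"
    then obtain v n where x: "x = KH i C v n" and v: "v \<in> C" and n: "L \<le> n" by blast
    have n1: "1 \<le> n" using n assms(2) by simp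
    obtain q where q: "walk (K_verts G I P) (K_edges G X I P R r) q" "hd q = KH i C v n" "last q = KA i C"
      "length q = (r - n) + 2" "\<forall>w\<in>set q. w = KA i C \<or> (\<exists>k\<ge>n. w = KH i C v k)"
      using vert_path[OF v n1] by blast
    have fq: "\<forall>w\<in>set q. L \<le> fdep i C r w"
    proof
      fix w assume "w \<in> set q"
      with q(5) have "w = KA i C \<or> (\<exists>k\<ge>n. w = KH i C v k)" by blast
      thus "L \<le> fdep i C r w" using n assms(1) by auto
    qed
    have key: "length q - 1 \<le> m" if "Suc r \<le> min n r + m" for m
      using that q(4) by (simp add: min_def split: if_splits)
    have g1: "geodesic (K_verts G I P) (K_edges G X I P R r) q"
    proof (rule geodesicI[OF q(1)])
      fix m assume "gdist (K_verts G I P) (K_edges G X I P R r) (hd q) (last q) = enat m"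
      from gdist_lip[where f="fdep i C r", OF this fdep_lip[where G=G and X=X and I=I and P=P and R=R]] q(2,3)
      show "length q - 1 \<le> m" using key by simp
    qed
    have wr: "walk (K_verts G I P) (K_edges G X I P R r) (rev q)"
      by (rule walk_rev[OF K_sym q(1)])
    have qne: "q \<noteq> []" using q(1) by (simp add: walk_def)
    have g2: "geodesic (K_verts G I P) (K_edges G X I P R r) (rev q)"
    proof (rule geodesicI[OF wr])
      fix m assume "gdist (K_verts G I P) (K_edges G X I P R r) (hd (rev q)) (last (rev q)) = enat m"
      hence "gdist (K_verts G I P) (K_edges G X I P R r) (KA i C) (KH i C v n) = enat m"
        using q(2,3) qne by (simp add: hd_rev last_rev)
      from gdist_lip[where f="fdep i C r", OF this fdep_lip[where G=G and X=X and I=I and P=P and R=R]]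
      show "length (rev q) - 1 \<le> m" using key by simp
    qed
    show ?thesis using g1 g2 q(2,3) fq qne x by (intro conjI exI[of _ q] exI[of _ "rev q"]) (auto simp: hd_rev last_rev)
  qed
  thus "\<exists>q. geodesic (K_verts G I P) (K_edges G X I P R r) q \<and> hd q = x \<and> last q = KA i C \<and>
           (\<forall>w\<in>set q. L \<le> fdep i C r w)"
    and "\<exists>q. geodesic (K_verts G I P) (K_edges G X I P R r) q \<and> hd q = KA i C \<and> last q = x \<and>
           (\<forall>w\<in>set q. L \<le> fdep i C r w)" by blast+
qed

lemma lift_V: "z \<in> Hp i C \<Longrightarrow> lift L i C z \<in> K_verts G I P"
  unfolding Hp_def using KH_V KA_V by auto

lemma lift_H: "z \<in> L_horoball L i C \<Longrightarrow> lift L i C z = z"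
  unfolding L_horoball_def by (auto simp: max_def)

lemma lift_edge:
  assumes e: "(a,b) \<in> K_edges G X I P R r" and a: "a \<in> Hp i C" and b: "b \<in> Hp i C"
  shows "lift L i C a = lift L i C b \<or> (lift L i C a, lift L i C b) \<in> K_edges G X I P R r"
proof -
  from a have "a = KA i C \<or> (\<exists>u n. a = KH i C u n \<and> u \<in> C \<and> 1 \<le> n)" unfolding Hp_def by blast
  thus ?thesis
  proof
    assume aA: "a = KA i C"
    then obtain v m where bv: "b = hv i C v m" and rm: "r \<le> m" using nbr_KA[OF e[unfolded aA]] by blast
    from b bv obtain u' m' where "b = KH i C u' m'" "u' \<in> C" "1 \<le> m'" unfolding Hp_def by auto
    with bv have b': "b = KH i C u' m'" "u' \<in> C" "1 \<le> m'" "m = m'" by auto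
    have "(KA i C, KH i C u' (max m' L)) \<in> K_edges G X I P R r"
      using e_apex[OF b'(2), of "max m' L"] rm b'(3,4) by (simp add: hv_pos)
    thus ?thesis using aA b' by simp
  next
    assume "\<exists>u n. a = KH i C u n \<and> u \<in> C \<and> 1 \<le> n"
    then obtain u n where aK: "a = KH i C u n" and u: "u \<in> C" and n: "1 \<le> n" by blast
    have hvM: "hv i C u (max n L) = KH i C u (max n L)" using n by (simp add: hv_pos)
    from nbr_KH[OF e[unfolded aK] n] show ?thesis
    proof (elim disjE exE conjE)
      assume bK: "b = KH i C u (Suc n)"
      show ?thesis
      proof (cases "Suc n \<le> L")
        case True thus ?thesis using aK bK by (simp add: max_def)
      next
        case False
        hence "max n L = n" "max (Suc n) L = Suc n" by auto
        thus ?thesis using aK bK e_vert[OF u n] by simp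
      qed
    next
      assume bK: "b = hv i C u (n - 1)"
      have "n - 1 \<noteq> 0" using b bK unfolding Hp_def by (auto simp: hv_def)
      hence bK': "b = KH i C u (n - 1)" and n2: "1 \<le> n - 1" using bK by (auto simp: hv_def)
      show ?thesis
      proof (cases "n \<le> L")
        case True
        hence "max n L = L" "max (n - 1) L = L" by auto
        thus ?thesis using aK bK' by simp
      next
        case False
        have "(KH i C u (n-1), KH i C u (Suc (n-1))) \<in> K_edges G X I P R r" by (rule e_vert[OF u n2])
        moreover have "Suc (n-1) = n" using n2 by simp
        ultimately have "(KH i C u n, KH i C u (n-1)) \<in> K_edges G X I P R r" using K_sym by simp
        moreover have "max n L = n" "max (n - 1) L = n - 1" using False by auto
        ultimately show ?thesis using aK bK' by simp
      qed
    next
      assume bA: "b = KA i C" and rn: "r \<le> n"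
      have "(KA i C, hv i C u (max n L)) \<in> K_edges G X I P R r" using e_apex[OF u] rn by simp
      hence "(KH i C u (max n L), KA i C) \<in> K_edges G X I P R r" using K_sym[of "KA i C" "hv i C u (max n L)"] hvM by simp
      thus ?thesis using aK bA by simp
    next
      fix w assume bK: "b = KH i C w n" and h1: "0 < gdist C (cay_edges G C (Xi G P R i)) u w"
        and h2: "gdist C (cay_edges G C (Xi G P R i)) u w \<le> enat (2 ^ n)"
      have w: "w \<in> C" using b bK unfolding Hp_def by auto
      have M1: "1 \<le> max n L" using n by simp
      have pw: "enat (2 ^ n) \<le> enat (2 ^ max n L)" by simp
      have "gdist C (cay_edges G C (Xi G P R i)) u w \<le> enat (2 ^ max n L)"
        using h2 pw by (rule order_trans)
      hence "(KH i C u (max n L), KH i C w (max n L)) \<in> K_edges G X I P R r"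
        using e_hor[OF M1 u w] h1 by blast
      thus ?thesis using aK bK by simp
    next
      fix w assume bK: "b = KH i C w n" and h1: "0 < gdist C (cay_edges G C (Xi G P R i)) w u"
        and h2: "gdist C (cay_edges G C (Xi G P R i)) w u \<le> enat (2 ^ n)"
      have w: "w \<in> C" using b bK unfolding Hp_def by auto
      have M1: "1 \<le> max n L" using n by simp
      have pw: "enat (2 ^ n) \<le> enat (2 ^ max n L)" by simp
      have "gdist C (cay_edges G C (Xi G P R i)) w u \<le> enat (2 ^ max n L)"
        using h2 pw by (rule order_trans)
      hence "(KH i C w (max n L), KH i C u (max n L)) \<in> K_edges G X I P R r"
        using e_hor[OF M1 w u] h1 by blast
      hence "(KH i C u (max n L), KH i C w (max n L)) \<in> K_edges G X I P R r" by (rule K_sym)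
      thus ?thesis using aK bK by simp
    qed
  qed
qed

end




lemma inH_simps[simp]:
  "KH j C' w m \<in> L_horoball L i C \<longleftrightarrow> j = i \<and> C' = C \<and> w \<in> C \<and> L \<le> m"
  "KA i C \<in> L_horoball L i C"
  "KG g \<notin> L_horoball L i C"
  unfolding L_horoball_def by auto

lemma hv_inj: "hv i C u m = hv i C w m \<Longrightarrow> u = w"
  by (simp add: hv_def split: if_splits)

context
  fixes G :: "('g, 'b) monoid_scheme" and I :: "'i set" and P :: "'i \<Rightarrow> 'g set"
    and X :: "'g set" and R :: "('g, 'i) rletter list set" and r :: nat and i :: 'i and C :: "'g set"
  assumes iI: "i \<in> I" and CI: "C \<in> lcosets_of G (P i)"
begin

lemmas liftV = lift_V[where i=i and I=I and C=C and G=G and P=P, OF iI CI]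
lemmas KAV = KA_V[where i=i and I=I and C=C and G=G and P=P, OF iI CI]
lemmas KHV = KH_V[where i=i and I=I and C=C and G=G and P=P, OF iI CI]
lemmas eapex = e_apex[where i=i and I=I and C=C and G=G and P=P and X=X and R=R, OF iI CI]
lemmas vgeo = vert_geo[where i=i and I=I and C=C and G=G and P=P and X=X and R=R and r=r, OF iI CI]
lemmas liftH = lift_H[where i=i and I=I and C=C and G=G and P=P, OF iI CI]
lemmas liftE = lift_edge[where i=i and I=I and C=C and G=G and P=P, OF iI CI]

lemma lift_dist:
  assumes w: "walk (K_verts G I P) (K_edges G X I P R r) xs" and s: "set xs \<subseteq> Hp i C"
  shows "a \<le> b \<Longrightarrow> b < length xs \<Longrightarrow>
    gdist (K_verts G I P) (K_edges G X I P R r) (lift L i C (xs ! a)) (lift L i C (xs ! b)) \<le> enat (b - a)"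
proof (induction b)
  case 0
  hence "a = 0" by simp
  moreover have "xs ! 0 \<in> Hp i C" using s 0 by auto
  ultimately show ?case using gdist_refl[OF liftV] by (simp add: zero_enat_def)
next
  case (Suc b)
  show ?case
  proof (cases "a = Suc b")
    case True
    have "xs ! a \<in> Hp i C" using s Suc.prems by auto
    thus ?thesis using gdist_refl[OF liftV] True by (simp add: zero_enat_def)
  next
    case False
    hence ab: "a \<le> b" using Suc.prems by simp
    have IH: "gdist (K_verts G I P) (K_edges G X I P R r) (lift L i C (xs ! a)) (lift L i C (xs ! b)) \<le> enat (b - a)"
      using Suc.IH ab Suc.prems by simp
    have e: "(xs ! b, xs ! Suc b) \<in> K_edges G X I P R r" using w Suc.prems unfolding walk_def by blast
    have hb: "xs ! b \<in> Hp i C" and hb': "xs ! Suc b \<in> Hp i C" using s Suc.prems by auto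
    have one: "gdist (K_verts G I P) (K_edges G X I P R r) (lift L i C (xs ! b)) (lift L i C (xs ! Suc b)) \<le> 1"
    proof (cases "lift L i C (xs ! b) = lift L i C (xs ! Suc b)")
      case True
      have "gdist (K_verts G I P) (K_edges G X I P R r) (lift L i C (xs ! b)) (lift L i C (xs ! b)) = 0"
        by (rule gdist_refl[OF liftV[OF hb]])
      thus ?thesis using True by simp
    next
      case False
      hence "(lift L i C (xs ! b), lift L i C (xs ! Suc b)) \<in> K_edges G X I P R r"
        using liftE[OF e hb hb', of L] by blast
      thus ?thesis by (rule gdist_edge[OF liftV[OF hb] liftV[OF hb']])
    qed
    have "gdist (K_verts G I P) (K_edges G X I P R r) (lift L i C (xs ! a)) (lift L i C (xs ! Suc b))
       \<le> gdist (K_verts G I P) (K_edges G X I P R r) (lift L i C (xs ! a)) (lift L i C (xs ! b)) +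
         gdist (K_verts G I P) (K_edges G X I P R r) (lift L i C (xs ! b)) (lift L i C (xs ! Suc b))"
      by (rule gdist_triangle)
    also have "\<dots> \<le> enat (b - a) + 1" by (rule add_mono[OF IH one])
    also have "\<dots> = enat (Suc b - a)" using ab by (simp add: one_enat_def)
    finally show ?thesis .
  qed
qed


lemma nbr_out:
  assumes e: "(KH i C u n, z) \<in> K_edges G X I P R r" and u: "u \<in> C" and n: "L \<le> n" and L1: "1 \<le> L"
    and zV: "z \<in> K_verts G I P" and zH: "z \<notin> L_horoball L i C"
  shows "n = L \<and> z = hv i C u (L - 1)"
proof -
  have n1: "1 \<le> n" using n L1 by simp
  from nbr_KH[OF e n1] consider (a) "z = KH i C u (Suc n)" | (b) "z = hv i C u (n - 1)" | (c) "z = KA i C"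
     | (d) w where "z = KH i C w n"
  proof -
    assume h: "z = KH i C u (Suc n) \<Longrightarrow> thesis" "z = hv i C u (n - 1) \<Longrightarrow> thesis"
      "z = KA i C \<Longrightarrow> thesis" "\<And>w. z = KH i C w n \<Longrightarrow> thesis"
    from nbr_KH[OF e n1] show thesis
    proof (elim disjE exE conjE)
      assume "z = KH i C u (Suc n)" thus thesis by (rule h(1))
    next
      assume "z = hv i C u (n - 1)" thus thesis by (rule h(2))
    next
      assume "z = KA i C" thus thesis by (rule h(3))
    next
      fix w assume "z = KH i C w n" thus thesis by (rule h(4))
    next
      fix w assume "z = KH i C w n" thus thesis by (rule h(4))
    qed
  qed
  thus ?thesis
  proof cases
    case a
    have "KH i C u (Suc n) \<in> L_horoball L i C" using u n by simp
    thus ?thesis using a zH by simp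
  next
    case b
    show ?thesis
    proof (cases "L \<le> n - 1")
      case True
      hence "z = KH i C u (n - 1)" using b L1 by (simp add: hv_pos)
      moreover have "KH i C u (n - 1) \<in> L_horoball L i C" using u True by simp
      ultimately show ?thesis using zH by simp
    next
      case False
      hence "n = L" using n by simp
      thus ?thesis using b by simp
    qed
  next
    case c
    thus ?thesis using zH by simp
  next
    case (d w)
    have "KH i C w n \<in> K_verts G I P" using zV d by simp
    hence "w \<in> C" by (rule KH_VD[THEN conjunct1])
    hence "KH i C w n \<in> L_horoball L i C" using n by simp
    thus ?thesis using d zH by simp
  qed
qed

lemma apex_close:
  assumes "r < L" "x \<in> L_horoball L i C"
  shows "gdist (K_verts G I P) (K_edges G X I P R r) x (KA i C) \<le> 1 \<and>
         gdist (K_verts G I P) (K_edges G X I P R r) (KA i C) x \<le> 1"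
proof -
  have "x = KA i C \<or> (\<exists>v n. x = KH i C v n \<and> v \<in> C \<and> L \<le> n)"
    using assms(2) unfolding L_horoball_def by blast
  thus ?thesis
  proof
    assume "x = KA i C" thus ?thesis using gdist_refl[OF KAV] by simp
  next
    assume "\<exists>v n. x = KH i C v n \<and> v \<in> C \<and> L \<le> n"
    then obtain v n where x: "x = KH i C v n" "v \<in> C" "L \<le> n" by blast
    have n1: "0 < n" "r \<le> n" using x assms(1) by auto
    have e: "(KA i C, KH i C v n) \<in> K_edges G X I P R r"
      using eapex[OF x(2) n1(2)] n1(1) by (simp add: hv_pos)
    have xV: "x \<in> K_verts G I P" using KHV[OF x(2)] n1 x(1) by simp
    show ?thesis using gdist_edge[OF xV KAV] gdist_edge[OF KAV xV] e K_sym[OF e] x(1)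
      by simp
  qed
qed

lemma case_gt:
  assumes rL: "r < L" and L1: "1 \<le> L"
    and geo: "geodesic (K_verts G I P) (K_edges G X I P R r) xs"
    and hx: "hd xs \<in> L_horoball L i C" and hy: "last xs \<in> L_horoball L i C"
  shows "set xs \<subseteq> L_horoball L i C"
proof (rule ccontr)
  let ?V = "K_verts G I P" and ?E = "K_edges G X I P R r" and ?H = "L_horoball L i C"
  assume "\<not> set xs \<subseteq> ?H"
  then obtain z where z: "z \<in> set xs" "z \<notin> ?H" by blast
  then obtain k where k0': "k < length xs" "xs ! k = z" by (auto simp: in_set_conv_nth)
  hence k: "k < length xs" "xs ! k \<notin> ?H" using z by auto
  have w: "walk ?V ?E xs" and g: "enat (length xs - 1) = gdist ?V ?E (hd xs) (last xs)"
    using geo unfolding geodesic_def by auto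
  have ne: "xs \<noteq> []" using w by (simp add: walk_def)
  have sV: "set xs \<subseteq> ?V" using w by (simp add: walk_def)
  have k0: "k \<noteq> 0"
  proof
    assume "k = 0" hence "xs ! k = hd xs" using ne by (simp add: hd_conv_nth)
    thus False using k hx by simp
  qed
  have kl: "k \<noteq> length xs - 1"
  proof
    assume "k = length xs - 1" hence "xs ! k = last xs" using ne by (simp add: last_conv_nth)
    thus False using k hy by simp
  qed
  have c1: "gdist ?V ?E (hd xs) (KA i C) \<le> 1" and c2: "gdist ?V ?E (KA i C) (last xs) \<le> 1"
    using apex_close[OF rL hx] apex_close[OF rL hy] by auto
  have "gdist ?V ?E (hd xs) (last xs) \<le> gdist ?V ?E (hd xs) (KA i C) + gdist ?V ?E (KA i C) (last xs)"
    by (rule gdist_triangle)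
  also have "\<dots> \<le> 1 + 1" by (rule add_mono[OF c1 c2])
  also have "(1::enat) + 1 = enat 2" by (simp add: one_enat_def)
  finally have "enat (length xs - 1) \<le> enat 2" using g by simp
  hence len3: "length xs = 3" and k1: "k = 1" using k k0 kl by (auto simp: numeral_eq_enat)
  have ee: "\<forall>k. Suc k < length xs \<longrightarrow> (xs ! k, xs ! Suc k) \<in> ?E" using w by (simp add: walk_def)
  have e1: "(xs ! 0, xs ! 1) \<in> ?E" using ee[rule_format, of 0] len3 by simp
  have e2: "(xs ! 1, xs ! 2) \<in> ?E" using ee[rule_format, of 1] len3 by (simp add: numeral_2_eq_2)
  have x0: "xs ! 0 = hd xs" using ne by (simp add: hd_conv_nth)
  have x2: "xs ! 2 = last xs" using ne len3 by (simp add: last_conv_nth)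
  have g2: "gdist ?V ?E (hd xs) (last xs) = 2" using g len3 by (simp add: numeral_eq_enat)
  have "xs ! 1 \<in> set xs" using len3 by (intro nth_mem) simp
  hence zV: "xs ! 1 \<in> ?V" using sV by blast
  have zH: "xs ! 1 \<notin> ?H" using k k1 by simp
  show False
  proof (cases "hd xs = KA i C \<or> last xs = KA i C")
    case True
    hence "gdist ?V ?E (hd xs) (last xs) \<le> 1" using c1 c2 by auto
    thus False using g2 by (simp add: one_enat_def numeral_eq_enat)
  next
    case False
    then obtain u n where x: "hd xs = KH i C u n" "u \<in> C" "L \<le> n"
      using hx unfolding L_horoball_def by blast
    obtain u' n' where y: "last xs = KH i C u' n'" "u' \<in> C" "L \<le> n'"
      using hy False unfolding L_horoball_def by blast
    have a: "n = L \<and> xs ! 1 = hv i C u (L - 1)"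
      by (rule nbr_out[OF _ x(2,3) L1 zV zH]) (use e1 x0 x(1) in simp)
    have b: "n' = L \<and> xs ! 1 = hv i C u' (L - 1)"
      by (rule nbr_out[OF _ y(2,3) L1 zV zH]) (use K_sym[OF e2] x2 y(1) in simp)
    have "u = u'" using hv_inj[of i C u "L - 1" u'] a b by simp
    hence "hd xs = last xs" using a b x y by simp
    moreover have "hd xs \<in> ?V" using sV ne by auto
    ultimately have "gdist ?V ?E (hd xs) (last xs) = 0" using gdist_refl by metis
    thus False using g2 by simp
  qed
qed


lemma case_le:
  assumes Lr: "L \<le> r" and L1: "1 \<le> L" and Ld: "real L > \<delta>"
    and hyp: "hyp_graph \<delta> (K_verts G I P) (K_edges G X I P R r)"
    and geo: "geodesic (K_verts G I P) (K_edges G X I P R r) xs"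
    and hx: "hd xs \<in> L_horoball L i C" and hy: "last xs \<in> L_horoball L i C"
  shows "set xs \<subseteq> L_horoball L i C"
proof (rule ccontr)
  let ?V = "K_verts G I P" and ?E = "K_edges G X I P R r" and ?H = "L_horoball L i C"
  assume "\<not> set xs \<subseteq> ?H"
  then obtain z0 where z0: "z0 \<in> set xs" "z0 \<notin> ?H" by blast
  have w: "walk ?V ?E xs" and g: "enat (length xs - 1) = gdist ?V ?E (hd xs) (last xs)"
    using geo unfolding geodesic_def by auto
  have ne: "xs \<noteq> []" using w by (simp add: walk_def)
  have sV: "set xs \<subseteq> ?V" using w by (simp add: walk_def)
  show False
  proof (cases "set xs \<subseteq> Hp i C")
    case False
    then obtain z where z: "z \<in> set xs" "z \<notin> Hp i C" by blast
    have zV: "z \<in> ?V" using z sV by blast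
    have fz: "fdep i C r z = 0" by (rule notHp_fdep[OF zV z(2)])
    obtain q where q: "geodesic ?V ?E q" "hd q = last xs" "last q = KA i C" "\<forall>w\<in>set q. L \<le> fdep i C r w"
      using vgeo(1)[OF Lr L1 hy] by blast
    obtain s where s: "geodesic ?V ?E s" "hd s = KA i C" "last s = hd xs" "\<forall>w\<in>set s. L \<le> fdep i C r w"
      using vgeo(2)[OF Lr L1 hx] by blast
    have prem: "geodesic ?V ?E xs \<and> geodesic ?V ?E q \<and> geodesic ?V ?E s \<and>
        last xs = hd q \<and> last q = hd s \<and> last s = hd xs" using geo q s by simp
    from hyp[unfolded hyp_graph_def, rule_format, OF prem z(1)]
    obtain w n where wq: "w \<in> set q \<union> set s" "gdist ?V ?E z w = enat n" "real n \<le> \<delta>" by blast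
    have fw: "L \<le> fdep i C r w" using wq(1) q(4) s(4) by blast
    have "fdep i C r w \<le> fdep i C r z + n"
      using gdist_lip[where f="fdep i C r", OF wq(2) fdep_lip[where G=G and X=X and I=I and P=P and R=R]] by simp
    hence "L \<le> n" using fw fz by simp
    hence "real L \<le> real n" by simp
    thus False using wq(3) Ld by linarith
  next
    case True
    define k where "k = (LEAST k. k < length xs \<and> xs ! k \<notin> ?H)"
    have ex: "\<exists>k. k < length xs \<and> xs ! k \<notin> ?H" using z0 by (auto simp: in_set_conv_nth)
    have k: "k < length xs \<and> xs ! k \<notin> ?H" unfolding k_def by (rule LeastI_ex[OF ex])
    have x0: "xs ! 0 = hd xs" using ne by (simp add: hd_conv_nth)
    have k0: "k \<noteq> 0"
    proof
      assume "k = 0" thus False using k x0 hx by simp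
    qed
    have km: "xs ! (k - 1) \<in> ?H"
    proof (rule ccontr)
      assume a: "xs ! (k - 1) \<notin> ?H"
      have "(LEAST j. j < length xs \<and> xs ! j \<notin> ?H) \<le> k - 1" by (rule Least_le) (use a k in auto)
      hence "k \<le> k - 1" using k_def by simp
      thus False using k0 by simp
    qed
    have ee: "\<forall>j. Suc j < length xs \<longrightarrow> (xs ! j, xs ! Suc j) \<in> ?E" using w by (simp add: walk_def)
    have sk: "Suc (k - 1) = k" using k0 by simp
    have e: "(xs ! (k - 1), xs ! k) \<in> ?E" using ee[rule_format, of "k - 1"] sk k by simp
    have "xs ! k \<in> set xs" using k by (intro nth_mem) simp
    hence kHp: "xs ! k \<in> Hp i C" using True by blast
    have "xs ! k = KA i C \<or> (\<exists>u m. xs ! k = KH i C u m \<and> u \<in> C \<and> 1 \<le> m)"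
      using kHp unfolding Hp_def by blast
    moreover have "xs ! k \<noteq> KA i C" using k by auto
    ultimately obtain u m where xk: "xs ! k = KH i C u m" "u \<in> C" "1 \<le> m" by blast
    have mL: "m < L" using k xk by auto
    have e': "(KH i C u m, xs ! (k - 1)) \<in> ?E" using K_sym[OF e] xk(1) by simp
    have eq: "lift L i C (xs ! (k - 1)) = lift L i C (xs ! k)"
      using nbr_KH[OF e' xk(3)]
    proof (elim disjE exE conjE)
      assume b: "xs ! (k - 1) = KH i C u (Suc m)"
      have "max (Suc m) L = L" "max m L = L" using mL by auto
      thus ?thesis using b xk(1) by simp
    next
      assume b: "xs ! (k - 1) = hv i C u (m - 1)"
      show ?thesis
      proof (cases "m - 1 = 0")
        case True thus ?thesis using b km by (simp add: hv_def)
      next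
        case False
        hence "xs ! (k - 1) = KH i C u (m - 1)" using b by (simp add: hv_def)
        thus ?thesis using km mL by auto
      qed
    next
      assume "r \<le> m" thus ?thesis using mL Lr by simp
    next
      fix w assume b: "xs ! (k - 1) = KH i C w m"
      thus ?thesis using km mL by auto
    next
      fix w assume b: "xs ! (k - 1) = KH i C w m"
      thus ?thesis using km mL by auto
    qed
    have L0: "lift L i C (xs ! 0) = hd xs" using liftH[OF hx] x0 by simp
    have xl: "xs ! (length xs - 1) = last xs" using ne by (simp add: last_conv_nth)
    have Ll: "lift L i C (xs ! (length xs - 1)) = last xs" using liftH[OF hy] xl by simp
    have d1: "gdist ?V ?E (lift L i C (xs ! 0)) (lift L i C (xs ! (k - 1))) \<le> enat (k - 1 - 0)"
      by (rule lift_dist[OF w True]) (use k in auto)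
    have d2: "gdist ?V ?E (lift L i C (xs ! k)) (lift L i C (xs ! (length xs - 1))) \<le> enat (length xs - 1 - k)"
      by (rule lift_dist[OF w True]) (use k in auto)
    have "gdist ?V ?E (hd xs) (last xs) \<le>
        gdist ?V ?E (lift L i C (xs ! 0)) (lift L i C (xs ! (k - 1))) +
        gdist ?V ?E (lift L i C (xs ! (k - 1))) (lift L i C (xs ! (length xs - 1)))"
      unfolding L0 Ll by (rule gdist_triangle)
    also have "\<dots> \<le> enat (k - 1 - 0) + enat (length xs - 1 - k)"
      using add_mono[OF d1 d2] eq by simp
    finally have "enat (length xs - 1) \<le> enat (k - 1 - 0) + enat (length xs - 1 - k)" using g by simp
    hence "length xs - 1 \<le> (k - 1) + (length xs - 1 - k)" by simp
    thus False using k k0 by linarith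
  qed
qed

end

theorem lemma2p23:
  fixes G :: "('g, 'b) monoid_scheme" and I :: "'i set" and P :: "'i \<Rightarrow> 'g set"
    and X :: "'g set" and R :: "('g, 'i) rletter list set" and \<delta> :: real
  assumes "group G"
    and "fin_gen G"
    and "finite I"
    and "\<forall>i\<in>I. subgroup (P i) G \<and> infinite (P i)"
    and "X \<subseteq> carrier G" and "generate G X = carrier G"
    and "hyp_embedded G X I P"
    and "strongly_bounded_rel_pres G X I P R"
    and "\<forall>r::nat. hyp_graph \<delta> (K_verts G I P) (K_edges G X I P R r)"
  shows "\<forall>(L::nat) (r::nat) i C. 1 \<le> L \<longrightarrow> real L > \<delta> \<longrightarrow> i \<in> I \<longrightarrow> C \<in> lcosets_of G (P i) \<longrightarrow>
           convex_in (K_verts G I P) (K_edges G X I P R r) (L_horoball L i C)"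
proof (intro allI impI)
  fix L r :: nat and i C
  assume L1: "1 \<le> L" and Ld: "real L > \<delta>" and iI: "i \<in> I" and CI: "C \<in> lcosets_of G (P i)"
  show "convex_in (K_verts G I P) (K_edges G X I P R r) (L_horoball L i C)"
    unfolding convex_in_def
  proof (intro allI impI)
    fix xs assume a: "geodesic (K_verts G I P) (K_edges G X I P R r) xs \<and>
       hd xs \<in> L_horoball L i C \<and> last xs \<in> L_horoball L i C"
    show "set xs \<subseteq> L_horoball L i C"
    proof (cases "L \<le> r")
      case True
      have hyp: "hyp_graph \<delta> (K_verts G I P) (K_edges G X I P R r)" using assms(9) by blast
      show ?thesis
        using case_le[where i=i and I=I and C=C and G=G and P=P and X=X and R=R and r=r, OF iI CI True L1 Ld hyp]
          a by blast
    next
      case False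
      hence rL: "r < L" by simp
      show ?thesis
        using case_gt[where i=i and I=I and C=C and G=G and P=P and X=X and R=R and r=r, OF iI CI rL L1]
          a by blast
    qed
  qed
qed

end
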